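(* Let $G=(V,E)$ be a connected undirected graph with at least one edge and let $\lambda$ be the largest eigenvalue of the matrix $K$ defined below. Then every truthful mechanism $M$ for the Vertex Cover set system of $G$ has frugality ratio $\phi_M\ge\lambda/2$.
   Context: A mechanism for a set system takes bids $b$, selects a feasible winning set $S$ and pays each winner $e$ an amount $p_e\ge b_e$; profit is $p_e-c_e$ for winners and $0$ otherwise; truthful means that for every agent and every fixed bids of the others, bidding one's true cost $c_e$ maximizes profit. $p_M(c)$ is the total payment when bids equal costs $c$; $y(X)=\sum_{e\in X}y_e$. Lower bound $\nu(c)$: with $S$ a feasible set minimizing $c(S)$ (ties broken lexicographically), $\nu(c)$ is the maximum of $x(S)$ subject to $x_e\ge c_e$ for all $e$, $x_e=c_e$ for $e\notin S$, and $x(S)\le x(T)$ for all feasible $T$. Frugality ratio $\phi_M=\sup_c p_M(c)/\nu(c)$. Vertex Cover set system of $G$: agents are the vertices, feasible sets are the vertex covers of $G$. $\nu_v=\nu(\mathbf 1_v)$ where $\mathbf 1_v$ has $1$ at $v$, $0$ elsewhere. $K$ is the $V\times V$ matrix with $K_{uv}=1/\nu_u$ if $u\sim v$ and $0$ otherwise (i.e. $K=\mathrm{diag}(1/\nu_v)A$ with $A$ the adjacency matrix); $\lambda$ is its largest (real) eigenvalue. *)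

theory Defs
  imports "HOL-Analysis.Analysis"
begin

text \<open>Graphs: vertex set = the finite (linearly ordered) type 'v; edges given by a
symmetric irreflexive relation E.\<close>

definition simple_graph :: "('v \<Rightarrow> 'v \<Rightarrow> bool) \<Rightarrow> bool" where
  "simple_graph E \<longleftrightarrow> (\<forall>u v. E u v \<longrightarrow> E v u) \<and> (\<forall>v. \<not> E v v)"

definition connected_graph :: "('v \<Rightarrow> 'v \<Rightarrow> bool) \<Rightarrow> bool" where
  "connected_graph E \<longleftrightarrow> (\<forall>u v. E\<^sup>*\<^sup>* u v)"

definition vertex_cover :: "('v \<Rightarrow> 'v \<Rightarrow> bool) \<Rightarrow> 'v set \<Rightarrow> bool" where
  "vertex_cover E S \<longleftrightarrow> (\<forall>u v. E u v \<longrightarrow> u \<in> S \<or> v \<in> S)"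

definition nonneg :: "('v \<Rightarrow> real) \<Rightarrow> bool" where
  "nonneg c \<longleftrightarrow> (\<forall>e. 0 \<le> c e)"

definition is_mechanism ::
  "('v \<Rightarrow> 'v \<Rightarrow> bool) \<Rightarrow> (('v \<Rightarrow> real) \<Rightarrow> 'v set) \<Rightarrow> (('v \<Rightarrow> real) \<Rightarrow> 'v \<Rightarrow> real) \<Rightarrow> bool" where
  "is_mechanism E W p \<longleftrightarrow>
     (\<forall>b. nonneg b \<longrightarrow> vertex_cover E (W b) \<and> (\<forall>e\<in>W b. b e \<le> p b e))"

definition profit ::
  "(('v \<Rightarrow> real) \<Rightarrow> 'v set) \<Rightarrow> (('v \<Rightarrow> real) \<Rightarrow> 'v \<Rightarrow> real) \<Rightarrow> ('v \<Rightarrow> real) \<Rightarrow> 'v \<Rightarrow> real \<Rightarrow> real" where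
  "profit W p b e ce = (if e \<in> W b then p b e - ce else 0)"

definition truthful ::
  "(('v \<Rightarrow> real) \<Rightarrow> 'v set) \<Rightarrow> (('v \<Rightarrow> real) \<Rightarrow> 'v \<Rightarrow> real) \<Rightarrow> bool" where
  "truthful W p \<longleftrightarrow>
     (\<forall>b e ce x. nonneg b \<longrightarrow> 0 \<le> ce \<longrightarrow> 0 \<le> x \<longrightarrow>
        profit W p (b(e := x)) e ce \<le> profit W p (b(e := ce)) e ce)"

definition total_payment ::
  "(('v \<Rightarrow> real) \<Rightarrow> 'v set) \<Rightarrow> (('v \<Rightarrow> real) \<Rightarrow> 'v \<Rightarrow> real) \<Rightarrow> ('v \<Rightarrow> real) \<Rightarrow> real" where
  "total_payment W p c = (\<Sum>e\<in>W c. p c e)"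

definition min_cover :: "('v::{finite,linorder} \<Rightarrow> 'v \<Rightarrow> bool) \<Rightarrow> ('v \<Rightarrow> real) \<Rightarrow> 'v set" where
  "min_cover E c = (THE S. vertex_cover E S \<and> (\<forall>T. vertex_cover E T \<longrightarrow> sum c S \<le> sum c T) \<and>
      (\<forall>T. vertex_cover E T \<longrightarrow> sum c T = sum c S \<longrightarrow> T \<noteq> S \<longrightarrow>
           lexordp (<) (sorted_list_of_set S) (sorted_list_of_set T)))"

definition nu :: "('v::{finite,linorder} \<Rightarrow> 'v \<Rightarrow> bool) \<Rightarrow> ('v \<Rightarrow> real) \<Rightarrow> real" where
  "nu E c = (let S = min_cover E c in
     Sup {sum x S | x. (\<forall>e. c e \<le> x e) \<and> (\<forall>e. e \<notin> S \<longrightarrow> x e = c e) \<and>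
                        (\<forall>T. vertex_cover E T \<longrightarrow> sum x S \<le> sum x T)})"

definition frugality_ratio ::
  "('v::{finite,linorder} \<Rightarrow> 'v \<Rightarrow> bool) \<Rightarrow> (('v \<Rightarrow> real) \<Rightarrow> 'v set) \<Rightarrow> (('v \<Rightarrow> real) \<Rightarrow> 'v \<Rightarrow> real) \<Rightarrow> ereal" where
  "frugality_ratio E W p = (SUP c\<in>{c. nonneg c \<and> 0 < nu E c}. ereal (total_payment W p c / nu E c))"

definition nu_vertex :: "('v::{finite,linorder} \<Rightarrow> 'v \<Rightarrow> bool) \<Rightarrow> 'v \<Rightarrow> real" where
  "nu_vertex E v = nu E (\<lambda>u. if u = v then 1 else 0)"

definition Kmat :: "('v::{finite,linorder} \<Rightarrow> 'v \<Rightarrow> bool) \<Rightarrow> ((real, 'v) vec, 'v) vec" where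
  "Kmat E = (\<chi> u w. if E u w then 1 / nu_vertex E u else 0)"

definition real_eigenvalue :: "real^'n^'n \<Rightarrow> real \<Rightarrow> bool" where
  "real_eigenvalue A \<mu> \<longleftrightarrow> (\<exists>x. x \<noteq> 0 \<and> A *v x = \<mu> *\<^sub>R x)"

definition largest_eigenvalue :: "real^'n^'n \<Rightarrow> real" where
  "largest_eigenvalue A = Max {\<mu>. real_eigenvalue A \<mu>}"

end

theory Submission
  imports Defs
begin


lemma eig_indep:
  fixes A :: "real^'n^'n" and f :: "real \<Rightarrow> real^'n"
  assumes "finite M" "\<forall>\<mu>\<in>M. A *v f \<mu> = \<mu> *\<^sub>R f \<mu>" "\<forall>\<mu>\<in>M. f \<mu> \<noteq> 0"
  shows "(\<Sum>\<mu>\<in>M. a \<mu> *\<^sub>R f \<mu>) = 0 \<Longrightarrow> \<forall>\<mu>\<in>M. a \<mu> = 0"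
  using assms
proof (induction M arbitrary: a rule: finite_induct)
  case empty
  then show ?case by simp
next
  case (insert m M)
  have s: "a m *\<^sub>R f m + (\<Sum>\<mu>\<in>M. a \<mu> *\<^sub>R f \<mu>) = 0"
    using insert by simp
  have "A *v (a m *\<^sub>R f m + (\<Sum>\<mu>\<in>M. a \<mu> *\<^sub>R f \<mu>)) - m *\<^sub>R (a m *\<^sub>R f m + (\<Sum>\<mu>\<in>M. a \<mu> *\<^sub>R f \<mu>)) = 0"
    using s by simp
  moreover have "A *v (a m *\<^sub>R f m + (\<Sum>\<mu>\<in>M. a \<mu> *\<^sub>R f \<mu>)) = a m *\<^sub>R (m *\<^sub>R f m) + (\<Sum>\<mu>\<in>M. a \<mu> *\<^sub>R (\<mu> *\<^sub>R f \<mu>))"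
    using insert.prems by (simp add: matrix_vector_right_distrib vec.sum matrix_vector_mult_scaleR)
  ultimately have e1: "(\<Sum>\<mu>\<in>M. (a \<mu> * \<mu>) *\<^sub>R f \<mu>) - (\<Sum>\<mu>\<in>M. (m * a \<mu>) *\<^sub>R f \<mu>) = 0"
    by (simp add: scaleR_right_distrib scaleR_sum_right mult.commute)
  have "(\<Sum>\<mu>\<in>M. (a \<mu> * (\<mu> - m)) *\<^sub>R f \<mu>) = (\<Sum>\<mu>\<in>M. (a \<mu> * \<mu>) *\<^sub>R f \<mu> - (m * a \<mu>) *\<^sub>R f \<mu>)"
    by (rule sum.cong) (auto simp: algebra_simps)
  also have "\<dots> = 0" using e1 by (simp add: sum_subtractf)
  finally have "(\<Sum>\<mu>\<in>M. (a \<mu> * (\<mu> - m)) *\<^sub>R f \<mu>) = 0" .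
  then have "\<forall>\<mu>\<in>M. a \<mu> * (\<mu> - m) = 0"
    using insert.IH[of "\<lambda>\<mu>. a \<mu> * (\<mu> - m)"] insert.prems by auto
  then have z: "\<forall>\<mu>\<in>M. a \<mu> = 0" using insert.hyps by auto
  then have "a m *\<^sub>R f m = 0" using s by simp
  then have "a m = 0" using insert.prems by simp
  then show ?case using z by simp
qed

lemma eig_finite:
  fixes A :: "real^'n^'n"
  shows "finite {\<mu>. real_eigenvalue A \<mu>}"
proof -
  let ?S = "{\<mu>. real_eigenvalue A \<mu>}"
  define f where "f \<mu> = (SOME x. x \<noteq> 0 \<and> A *v x = \<mu> *\<^sub>R x)" for \<mu>
  have f: "\<forall>\<mu>\<in>?S. f \<mu> \<noteq> 0 \<and> A *v f \<mu> = \<mu> *\<^sub>R f \<mu>"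
  proof
    fix \<mu> assume "\<mu> \<in> ?S"
    then have "\<exists>x. x \<noteq> 0 \<and> A *v x = \<mu> *\<^sub>R x" by (simp add: real_eigenvalue_def)
    from someI_ex[OF this] show "f \<mu> \<noteq> 0 \<and> A *v f \<mu> = \<mu> *\<^sub>R f \<mu>" unfolding f_def .
  qed
  have bnd: "card M \<le> CARD('n)" if M: "finite M" "M \<subseteq> ?S" for M
  proof -
    have inj: "inj_on f M"
    proof (rule inj_onI)
      fix x y assume xy: "x \<in> M" "y \<in> M" "f x = f y"
      then have "x *\<^sub>R f x = y *\<^sub>R f x" using f M by (metis subsetD)
      then show "x = y" using f M xy by (metis scaleR_cancel_right subsetD)
    qed
    have ind: "independent (f ` M)"
      unfolding independent_explicit
    proof (intro conjI allI impI ballI)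
      show "finite (f ` M)" using M by simp
      fix c v assume c: "(\<Sum>v\<in>f ` M. c v *\<^sub>R v) = 0" and v: "v \<in> f ` M"
      have "(\<Sum>\<mu>\<in>M. (c \<circ> f) \<mu> *\<^sub>R f \<mu>) = 0"
        using c by (simp add: sum.reindex[OF inj])
      then have "\<forall>\<mu>\<in>M. (c \<circ> f) \<mu> = 0"
        using eig_indep[of M A f "c \<circ> f"] M f by auto
      then show "c v = 0" using v by auto
    qed
    have "card (f ` M) \<le> DIM(real^'n)" using independent_bound[OF ind] by simp
    then show ?thesis using card_image[OF inj] by simp
  qed
  show ?thesis
  proof (rule ccontr)
    assume "infinite ?S"
    then obtain B where "finite B" "card B = Suc CARD('n)" "B \<subseteq> ?S"
      using infinite_arbitrarily_large by blast
    then show False using bnd by force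
  qed
qed



lemma exists_eig:
  fixes A :: "real^'n^'n"
  assumes nn: "\<forall>i j. 0 \<le> A$i$j" and pos: "\<forall>j. \<exists>i. 0 < A$i$j"
  shows "\<exists>\<mu>. real_eigenvalue A \<mu>"
proof -
  define S where "S = {y::real^'n. (\<forall>i. 0 \<le> y$i) \<and> sum (\<lambda>i. y$i) UNIV = 1}"
  define s where "s y = sum (\<lambda>i. (A *v y)$i) UNIV" for y
  define g where "g y = (1 / s y) *\<^sub>R (A *v y)" for y
  have Av_nn: "0 \<le> (A *v y)$i" if "y \<in> S" for y i
    using that nn unfolding S_def matrix_vector_mult_def by (auto intro!: sum_nonneg)
  have s_pos: "0 < s y" if y: "y \<in> S" for y
  proof -
    have "\<exists>j. 0 < y$j"
    proof (rule ccontr)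
      assume "\<not> (\<exists>j. 0 < y$j)"
      then have h: "y$j \<le> 0" for j by (simp add: not_less)
      have "y$j = 0" for j using h[of j] y unfolding S_def by (simp add: order.antisym)
      then have "sum (\<lambda>i. y$i) UNIV = 0" by simp
      then show False using y unfolding S_def by simp
    qed
    then obtain j where j: "0 < y$j" by blast
    obtain i where i: "0 < A$i$j" using pos by blast
    have "A$i$j * y$j \<le> (\<Sum>k\<in>UNIV. A$i$k * y$k)"
      by (rule member_le_sum) (use nn y in \<open>auto simp: S_def\<close>)
    then have "0 < (A *v y)$i" using mult_pos_pos[OF i j]
      unfolding matrix_vector_mult_def by (simp del: sum_nonneg)
    moreover have "(A *v y)$i \<le> s y"
      unfolding s_def by (rule member_le_sum) (use Av_nn y in auto)
    ultimately show ?thesis by simp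
  qed
  have cS: "compact S"
    unfolding compact_eq_bounded_closed
  proof (intro conjI)
    have "S \<subseteq> cbox 0 1"
    proof
      fix y assume y: "y \<in> S"
      have "y$i \<le> 1" for i
      proof -
        have "y$i \<le> sum (\<lambda>i. y$i) UNIV"
          by (rule member_le_sum) (use y in \<open>auto simp: S_def\<close>)
        then show ?thesis using y by (simp add: S_def)
      qed
      then show "y \<in> cbox 0 1" using y by (auto simp: mem_box_cart S_def)
    qed
    then show "bounded S" using bounded_cbox bounded_subset by blast
    have "S = (\<Inter>i. {y. 0 \<le> y$i}) \<inter> {y. sum (\<lambda>i. y$i) UNIV = 1}"
      unfolding S_def by auto
    moreover have "closed (\<Inter>i. {y::real^'n. 0 \<le> y$i})"
      by (intro closed_INT ballI closed_Collect_le continuous_intros)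
    moreover have "closed {y::real^'n. sum (\<lambda>i. y$i) UNIV = 1}"
      by (intro closed_Collect_eq continuous_intros)
    ultimately show "closed S" by auto
  qed
  have cvS: "convex S"
    unfolding convex_def S_def
    by (auto simp: sum.distrib sum_distrib_left[symmetric])
  have neS: "S \<noteq> {}"
  proof -
    have "(\<chi> i. 1 / real CARD('n)) \<in> S" unfolding S_def by simp
    then show ?thesis by blast
  qed
  have contA: "continuous_on S (\<lambda>y. A *v y)"
    by (rule linear_continuous_on[OF linear_linear[THEN iffD2, OF matrix_vector_mul_linear]])
  have conts: "continuous_on S s"
    unfolding s_def by (intro continuous_intros contA)
  have contg: "continuous_on S g"
    unfolding g_def
    by (intro continuous_on_scaleR continuous_on_divide continuous_on_const conts contA)
       (use s_pos in force)
  have gS: "g \<in> S \<rightarrow> S"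
  proof
    fix y assume y: "y \<in> S"
    have "0 \<le> g y $ i" for i using Av_nn[OF y] s_pos[OF y] by (simp add: g_def)
    moreover have "sum (\<lambda>i. g y $ i) UNIV = 1"
      using s_pos[OF y] by (simp add: g_def s_def sum_divide_distrib[symmetric])
    ultimately show "g y \<in> S" by (simp add: S_def)
  qed
  obtain y where y: "y \<in> S" "g y = y" using brouwer[OF cS cvS neS contg gS] by blast
  have "A *v y = s y *\<^sub>R g y" using s_pos[OF y(1)] by (simp add: g_def)
  then have "A *v y = s y *\<^sub>R y" using y by simp
  moreover have "y \<noteq> 0" using y by (auto simp: S_def)
  ultimately show ?thesis unfolding real_eigenvalue_def by blast
qed



lemma lex_conv: "List.lexordp (<) xs ys = ord_class.lexordp (xs::'a::linorder list) ys"
  by (simp add: List.lexordp_def lexordp_conv_lexord)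

lemma lex_min:
  fixes L :: "'a::linorder list set"
  assumes "finite L" "L \<noteq> {}"
  shows "\<exists>l\<in>L. \<forall>m\<in>L. m \<noteq> l \<longrightarrow> ord_class.lexordp l m"
  using assms
proof (induction L rule: finite_ne_induct)
  case (singleton x)
  then show ?case by simp
next
  case (insert a L)
  from insert.IH obtain l where l1: "l \<in> L" and l2: "\<And>m. m\<in>L \<Longrightarrow> m \<noteq> l \<Longrightarrow> ord_class.lexordp l m"
    by blast
  show ?case
  proof (cases "ord_class.lexordp a l")
    case True
    have "ord_class.lexordp a m" if "m \<in> insert a L" "m \<noteq> a" for m
    proof -
      have "m \<in> L" using that by simp
      show ?thesis
      proof (cases "m = l")
        case True then show ?thesis using \<open>ord_class.lexordp a l\<close> by simp
      next
        case False then show ?thesis using l2[OF \<open>m \<in> L\<close>] True lexordp_trans by blast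
      qed
    qed
    then show ?thesis by blast
  next
    case False
    then have al: "a = l \<or> ord_class.lexordp l a" using lexordp_linear by blast
    have "ord_class.lexordp l m" if "m \<in> insert a L" "m \<noteq> l" for m
      using that al l2 by auto
    then show ?thesis using l1 by blast
  qed
qed

definition mcP :: "('v::{finite,linorder} \<Rightarrow> 'v \<Rightarrow> bool) \<Rightarrow> ('v \<Rightarrow> real) \<Rightarrow> 'v set \<Rightarrow> bool" where
  "mcP E c S \<longleftrightarrow> vertex_cover E S \<and> (\<forall>T. vertex_cover E T \<longrightarrow> sum c S \<le> sum c T) \<and>
      (\<forall>T. vertex_cover E T \<longrightarrow> sum c T = sum c S \<longrightarrow> T \<noteq> S \<longrightarrow>
           lexordp (<) (sorted_list_of_set S) (sorted_list_of_set T))"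

lemma mcP_ex1:
  fixes E :: "'v::{finite,linorder} \<Rightarrow> 'v \<Rightarrow> bool"
  shows "\<exists>!S. mcP E c S"
proof -
  let ?CV = "{S. vertex_cover E S}"
  have fin: "finite ?CV" by simp
  have cU: "vertex_cover E UNIV" by (simp add: vertex_cover_def)
  then have ne: "?CV \<noteq> {}" by blast
  define m where "m = Min (sum c ` ?CV)"
  have m_le: "m \<le> sum c T" if "vertex_cover E T" for T
    unfolding m_def using that fin by (intro Min_le) auto
  have "m \<in> sum c ` ?CV" unfolding m_def using fin ne by (intro Min_in) auto
  then obtain S1 where S1: "vertex_cover E S1" "sum c S1 = m" by auto
  define C where "C = {S. vertex_cover E S \<and> sum c S = m}"
  have "finite (sorted_list_of_set ` C)" by simp
  moreover have "sorted_list_of_set ` C \<noteq> {}" using S1 C_def by auto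
  ultimately obtain l where l: "l \<in> sorted_list_of_set ` C"
    "\<forall>k\<in>sorted_list_of_set ` C. k \<noteq> l \<longrightarrow> lexordp (<) l k"
    using lex_min[of "sorted_list_of_set ` C"] by (auto simp: lex_conv)
  then obtain S0 where S0: "S0 \<in> C" "l = sorted_list_of_set S0" by blast
  have P0: "mcP E c S0"
    unfolding mcP_def
  proof (intro conjI allI impI)
    show "vertex_cover E S0" using S0 C_def by auto
    fix T assume T: "vertex_cover E T"
    show "sum c S0 \<le> sum c T" using S0 C_def m_le[OF T] by auto
    assume "sum c T = sum c S0" "T \<noteq> S0"
    then have "T \<in> C" "sorted_list_of_set T \<noteq> sorted_list_of_set S0"
      using S0 C_def T sorted_list_of_set_inject[of T S0] by auto
    then show "lexordp (<) (sorted_list_of_set S0) (sorted_list_of_set T)"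
      using l S0 by (auto simp: lex_conv)
  qed
  have uniq: "S = S0" if PS: "mcP E c S" for S
  proof (rule ccontr)
    assume ne: "S \<noteq> S0"
    have cS: "vertex_cover E S" and mS: "\<And>T. vertex_cover E T \<Longrightarrow> sum c S \<le> sum c T"
      and lS: "\<And>T. vertex_cover E T \<Longrightarrow> sum c T = sum c S \<Longrightarrow> T \<noteq> S \<Longrightarrow>
           lexordp (<) (sorted_list_of_set S) (sorted_list_of_set T)"
      using PS unfolding mcP_def by blast+
    have cS0: "vertex_cover E S0" and mS0: "\<And>T. vertex_cover E T \<Longrightarrow> sum c S0 \<le> sum c T"
      and lS0: "\<And>T. vertex_cover E T \<Longrightarrow> sum c T = sum c S0 \<Longrightarrow> T \<noteq> S0 \<Longrightarrow>
           lexordp (<) (sorted_list_of_set S0) (sorted_list_of_set T)"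
      using P0 unfolding mcP_def by blast+
    have eq: "sum c S = sum c S0" using mS[OF cS0] mS0[OF cS] by simp
    have a1: "lexordp (<) (sorted_list_of_set S) (sorted_list_of_set S0)"
      using lS[OF cS0] eq ne by simp
    have a2: "lexordp (<) (sorted_list_of_set S0) (sorted_list_of_set S)"
      using lS0[OF cS] eq ne by simp
    have "ord_class.lexordp (sorted_list_of_set S) (sorted_list_of_set S)"
      using lexordp_trans[OF a1[unfolded lex_conv] a2[unfolded lex_conv]] .
    then show False by (simp add: lexordp_irreflexive')
  qed
  show ?thesis using P0 uniq by blast
qed

lemma min_cover_mcP:
  fixes E :: "'v::{finite,linorder} \<Rightarrow> 'v \<Rightarrow> bool"
  shows "mcP E c (min_cover E c)"
proof -
  have "min_cover E c = (THE S. mcP E c S)"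
    unfolding min_cover_def mcP_def by (rule refl)
  then show ?thesis using theI'[OF mcP_ex1] by simp
qed

lemma min_cover_cover:
  fixes E :: "'v::{finite,linorder} \<Rightarrow> 'v \<Rightarrow> bool"
  shows "vertex_cover E (min_cover E c)" "vertex_cover E T \<Longrightarrow> sum c (min_cover E c) \<le> sum c T"
  using min_cover_mcP[of E c] unfolding mcP_def by auto

lemma min_cover_scale:
  fixes E :: "'v::{finite,linorder} \<Rightarrow> 'v \<Rightarrow> bool"
  assumes "0 < t"
  shows "min_cover E (\<lambda>v. t * c v) = min_cover E c"
proof -
  have sc: "sum (\<lambda>v. t * c v) X = t * sum c X" for X by (simp add: sum_distrib_left)
  have le: "(t * a \<le> t * b) = (a \<le> b)" for a b :: real using assms by simp
  have eq: "(t * a = t * b) = (a = b)" for a b :: real using assms by simp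
  have "mcP E (\<lambda>v. t * c v) = mcP E c"
    unfolding mcP_def sc le eq by (rule refl)
  moreover have "min_cover E c' = (THE S. mcP E c' S)" for c'
    unfolding min_cover_def mcP_def by (rule refl)
  ultimately show ?thesis by simp
qed

definition nuset :: "('v::{finite,linorder} \<Rightarrow> 'v \<Rightarrow> bool) \<Rightarrow> ('v \<Rightarrow> real) \<Rightarrow> 'v set \<Rightarrow> real set" where
  "nuset E c S = {sum x S | x. (\<forall>e. c e \<le> x e) \<and> (\<forall>e. e \<notin> S \<longrightarrow> x e = c e) \<and>
                        (\<forall>T. vertex_cover E T \<longrightarrow> sum x S \<le> sum x T)}"

lemma nu_eq: "nu E c = Sup (nuset E c (min_cover E c))"
  unfolding nu_def nuset_def Let_def by simp

lemma nuset_scale: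
  fixes E :: "'v::{finite,linorder} \<Rightarrow> 'v \<Rightarrow> bool"
  assumes t: "0 < t"
  shows "nuset E (\<lambda>v. t * c v) S = (\<lambda>a. t * a) ` nuset E c S"
proof
  show "nuset E (\<lambda>v. t * c v) S \<subseteq> (\<lambda>a. t * a) ` nuset E c S"
  proof
    fix a assume "a \<in> nuset E (\<lambda>v. t * c v) S"
    then obtain x where x: "a = sum x S" "\<forall>e. t * c e \<le> x e" "\<forall>e. e \<notin> S \<longrightarrow> x e = t * c e"
      "\<forall>T. vertex_cover E T \<longrightarrow> sum x S \<le> sum x T" unfolding nuset_def by blast
    define y where "y v = x v / t" for v
    have sy: "sum y T = sum x T / t" for T unfolding y_def by (simp add: sum_divide_distrib)
    have "sum y S \<in> nuset E c S"
      unfolding nuset_def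
    proof (intro CollectI exI conjI allI impI)
      fix e show "c e \<le> y e" using x(2) t unfolding y_def by (simp add: pos_le_divide_eq mult.commute)
      assume "e \<notin> S" then show "y e = c e" using x(3) t unfolding y_def by simp
    next
      fix T assume "vertex_cover E T" then show "sum y S \<le> sum y T"
        using x(4) t unfolding sy by (simp add: divide_right_mono)
    qed simp
    moreover have "a = t * sum y S" using t x(1) sy by simp
    ultimately show "a \<in> (\<lambda>a. t * a) ` nuset E c S" by blast
  qed
next
  show "(\<lambda>a. t * a) ` nuset E c S \<subseteq> nuset E (\<lambda>v. t * c v) S"
  proof
    fix a assume "a \<in> (\<lambda>a. t * a) ` nuset E c S"
    then obtain x where x: "a = t * sum x S" "\<forall>e. c e \<le> x e" "\<forall>e. e \<notin> S \<longrightarrow> x e = c e"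
      "\<forall>T. vertex_cover E T \<longrightarrow> sum x S \<le> sum x T" unfolding nuset_def by blast
    define y where "y v = t * x v" for v
    have sy: "sum y T = t * sum x T" for T unfolding y_def by (simp add: sum_distrib_left)
    show "a \<in> nuset E (\<lambda>v. t * c v) S"
      unfolding nuset_def
    proof (intro CollectI exI conjI allI impI)
      fix e show "t * c e \<le> y e" using x(2) t unfolding y_def by simp
      assume "e \<notin> S" then show "y e = t * c e" using x(3) unfolding y_def by simp
    next
      fix T assume "vertex_cover E T" then show "sum y S \<le> sum y T"
        using x(4) t unfolding sy by simp
    qed (simp add: x(1) sy)
  qed
qed

lemma Sup_scale:
  fixes A :: "real set"
  assumes "0 < t" "A \<noteq> {}" "bdd_above A"
  shows "Sup ((\<lambda>a. t * a) ` A) = t * Sup A"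
proof (rule cSup_eq_non_empty)
  show "(\<lambda>a. t * a) ` A \<noteq> {}" using assms by simp
  fix x assume "x \<in> (\<lambda>a. t * a) ` A"
  then obtain a where a: "a \<in> A" "x = t * a" by blast
  have "a \<le> Sup A" using cSup_upper[OF a(1) assms(3)] .
  then show "x \<le> t * Sup A" using a assms(1) by simp
next
  fix y assume h: "\<And>x. x \<in> (\<lambda>a. t * a) ` A \<Longrightarrow> x \<le> y"
  have "Sup A \<le> y / t"
    using assms h by (intro cSup_least) (auto simp: pos_le_divide_eq mult.commute)
  then show "t * Sup A \<le> y" using assms by (simp add: pos_le_divide_eq mult.commute)
qed

lemma nu_scale:
  fixes E :: "'v::{finite,linorder} \<Rightarrow> 'v \<Rightarrow> bool"
  assumes "0 < t" "nuset E c (min_cover E c) \<noteq> {}" "bdd_above (nuset E c (min_cover E c))"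
  shows "nu E (\<lambda>v. t * c v) = t * nu E c"
  using assms by (simp add: nu_eq min_cover_scale nuset_scale Sup_scale)


lemma has_nbr:
  fixes E :: "'v \<Rightarrow> 'v \<Rightarrow> bool"
  assumes sg: "simple_graph E" and cg: "connected_graph E" and ex: "\<exists>u v. E u v"
  shows "\<exists>z. E w z"
proof (rule ccontr)
  assume no: "\<not> (\<exists>z. E w z)"
  obtain a b where ab: "E a b" using ex by blast
  have "a \<noteq> b" using ab sg unfolding simple_graph_def by blast
  have eq: "w = v" if "E\<^sup>*\<^sup>* w v" for v
    using that by (rule converse_rtranclpE) (use no in auto)
  have "w = a" "w = b" using eq cg unfolding connected_graph_def by auto
  then show False using \<open>a \<noteq> b\<close> by simp
qed

lemma nu_vertex_facts:
  fixes E :: "'v::{finite,linorder} \<Rightarrow> 'v \<Rightarrow> bool"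
  assumes sg: "simple_graph E" and ewz: "E w z"
  shows "1 \<le> nu_vertex E w"
    and "\<And>t. 0 < t \<Longrightarrow> nu E (\<lambda>v. t * (if v = w then 1 else 0)) = t * nu_vertex E w"
proof -
  define c where "c = (\<lambda>u. if u = w then 1 else 0::real)"
  define S where "S = min_cover E c"
  have noloop: "E u v \<Longrightarrow> u \<noteq> v" for u v using sg unfolding simple_graph_def by blast
  have covdel: "vertex_cover E (UNIV - {e})" for e
    unfolding vertex_cover_def using noloop by blast
  have cS: "vertex_cover E S" and mS: "\<And>T. vertex_cover E T \<Longrightarrow> sum c S \<le> sum c T"
    unfolding S_def using min_cover_cover by blast+
  have wS: "w \<notin> S"
  proof
    assume "w \<in> S"
    then have "sum c S = 1" unfolding c_def by simp
    moreover have "sum c (UNIV - {w}) = 0" unfolding c_def by simp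
    ultimately show False using mS[OF covdel[of w]] by simp
  qed
  have zS: "z \<in> S" using cS ewz wS unfolding vertex_cover_def by blast
  have zw: "z \<noteq> w" using noloop ewz by blast
  have cz: "\<forall>u\<in>S. c u = 0" using wS unfolding c_def by auto
  define x1 where "x1 = (\<lambda>u. if u = z then 1 else c u)"
  have x1nn: "0 \<le> x1 u" for u unfolding x1_def c_def by simp
  have sx1: "sum x1 S = 1"
  proof -
    have "sum x1 S = (\<Sum>u\<in>S. if u = z then 1 else 0)"
      by (rule sum.cong) (use cz in \<open>auto simp: x1_def\<close>)
    also have "\<dots> = 1" using zS by simp
    finally show ?thesis .
  qed
  have one_in: "1 \<in> nuset E c S"
    unfolding nuset_def
  proof (intro CollectI exI conjI allI impI)
    show "1 = sum x1 S" using sx1 by simp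
    fix e show "c e \<le> x1 e" unfolding x1_def c_def by simp
    assume "e \<notin> S" then show "x1 e = c e" using zS unfolding x1_def by auto
  next
    fix T assume T: "vertex_cover E T"
    then have "w \<in> T \<or> z \<in> T" using ewz unfolding vertex_cover_def by blast
    moreover have "x1 w = 1" "x1 z = 1" using zw unfolding x1_def c_def by auto
    ultimately have "1 \<le> sum x1 T"
      using member_le_sum[of _ T x1] x1nn by (metis finite)
    then show "sum x1 S \<le> sum x1 T" using sx1 by simp
  qed
  have bdd: "bdd_above (nuset E c S)"
  proof (rule bdd_aboveI)
    fix a assume "a \<in> nuset E c S"
    then obtain x where x: "a = sum x S" "\<forall>e. c e \<le> x e" "\<forall>e. e \<notin> S \<longrightarrow> x e = c e"
      "\<forall>T. vertex_cover E T \<longrightarrow> sum x S \<le> sum x T" unfolding nuset_def by blast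
    have out: "sum x (UNIV - S) = 1"
    proof -
      have "sum x (UNIV - S) = sum c (UNIV - S)" by (rule sum.cong) (use x(3) in auto)
      also have "\<dots> = 1" using wS unfolding c_def by simp
      finally show ?thesis .
    qed
    have tot: "sum x UNIV = sum x S + 1"
      using sum.subset_diff[of S UNIV x] out by simp
    have "x e \<le> 1" if "e \<in> S" for e
    proof -
      have "sum x S \<le> sum x (UNIV - {e})" using x(4) covdel by blast
      also have "\<dots> = sum x UNIV - x e" by (simp add: sum_diff1)
      finally show ?thesis using tot by simp
    qed
    then have "sum x S \<le> of_nat (card S) * 1" by (intro sum_bounded_above) auto
    then show "a \<le> real CARD('v)" using x(1) card_mono[of UNIV S] by simp
  qed
  have nuv: "nu_vertex E w = Sup (nuset E c S)"
    unfolding nu_vertex_def nu_eq S_def c_def by simp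
  show "1 \<le> nu_vertex E w" unfolding nuv using cSup_upper[OF one_in bdd] .
  fix t :: real assume t: "0 < t"
  have ne: "nuset E c (min_cover E c) \<noteq> {}" using one_in S_def by auto
  have "nu E (\<lambda>v. t * c v) = t * nu E c"
    by (rule nu_scale[OF t ne]) (use bdd S_def in simp)
  then show "nu E (\<lambda>v. t * (if v = w then 1 else 0)) = t * nu_vertex E w"
    unfolding c_def nu_vertex_def by simp
qed


theorem mainTheorem3:
  fixes E :: "'v::{finite,linorder} \<Rightarrow> 'v \<Rightarrow> bool"
    and W :: "('v \<Rightarrow> real) \<Rightarrow> 'v set"
    and p :: "('v \<Rightarrow> real) \<Rightarrow> 'v \<Rightarrow> real"
  assumes "simple_graph E" and "connected_graph E" and "\<exists>u v. E u v"
    and "is_mechanism E W p" and "truthful W p"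
  shows "ereal (largest_eigenvalue (Kmat E) / 2) \<le> frugality_ratio E W p"
proof -
  note sg = assms(1) and mech = assms(4) and tru = assms(5)
  have sym: "E u v = E v u" for u v using sg unfolding simple_graph_def by blast
  have noloop: "E u v \<Longrightarrow> u \<noteq> v" for u v using sg unfolding simple_graph_def by blast
  have nbr: "\<exists>z. E w z" for w using has_nbr[OF assms(1,2,3)] .
  define nv where "nv v = nu_vertex E v" for v
  have nv1: "1 \<le> nv v" for v using nbr[of v] nu_vertex_facts(1)[OF sg] unfolding nv_def by blast
  have nvnn: "0 \<le> nv v" for v using nv1[of v] by simp
  have nvscale: "nu E (\<lambda>v. t * (if v = w then 1 else 0)) = t * nv w" if "0 < t" for t w
    using nbr[of w] nu_vertex_facts(2)[OF sg _ that] unfolding nv_def by blast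
  define K where "K = Kmat E"
  have Kij: "K $ i $ j = (if E i j then 1 / nv i else 0)" for i j
    unfolding K_def Kmat_def nv_def by simp
  define lam where "lam = largest_eigenvalue K"
  have "\<exists>\<mu>. real_eigenvalue K \<mu>"
  proof (rule exists_eig)
    show "\<forall>i j. 0 \<le> K $ i $ j" using nv1 unfolding Kij by (auto intro: order.trans[OF zero_le_one])
    show "\<forall>j. \<exists>i. 0 < K $ i $ j"
    proof
      fix j obtain z where "E j z" using nbr by blast
      then have "E z j" using sym by blast
      then have "0 < K $ z $ j" using nv1[of z] unfolding Kij by simp
      then show "\<exists>i. 0 < K $ i $ j" by blast
    qed
  qed
  then have "lam \<in> {\<mu>. real_eigenvalue K \<mu>}"
    unfolding lam_def largest_eigenvalue_def using eig_finite[of K] by (intro Max_in) auto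
  then obtain x where x0: "x \<noteq> 0" and xe: "K *v x = lam *\<^sub>R x"
    unfolding real_eigenvalue_def by blast
  have row: "(\<Sum>w\<in>UNIV. if E u w then x$u * x$w else 0) = lam * nv u * (x$u)^2" for u
  proof -
    have "(K *v x) $ u = lam * x$u" using xe by simp
    then have s: "(\<Sum>w\<in>UNIV. (if E u w then 1 / nv u else 0) * x$w) = lam * x$u"
      unfolding matrix_vector_mult_def Kij by simp
    have m: "nv u * x$u * (\<Sum>w\<in>UNIV. (if E u w then 1 / nv u else 0) * x$w)
        = (\<Sum>w\<in>UNIV. if E u w then x$u * x$w else 0)"
      unfolding sum_distrib_left using nv1[of u] by (intro sum.cong) auto
    have "(\<Sum>w\<in>UNIV. if E u w then x$u * x$w else 0) = nv u * x$u * (lam * x$u)"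
      using m[unfolded s] by simp
    then show ?thesis by (simp add: power2_eq_square algebra_simps)
  qed
  define y where "y u = \<bar>x$u\<bar>" for u
  have ynn: "0 \<le> y u" for u unfolding y_def by simp
  define N where "N = (\<Sum>u\<in>UNIV. nv u * (y u)^2)"
  define Q where "Q = (\<Sum>u\<in>UNIV. \<Sum>w\<in>UNIV. if E u w then y u * y w else 0)"
  have Npos: "0 < N"
  proof -
    obtain u where "x$u \<noteq> 0" using x0 by (metis vec_eq_iff zero_index)
    then have pos: "0 < nv u * (y u)^2" using nv1[of u] unfolding y_def by simp
    have "nv u * (y u)^2 \<le> N" unfolding N_def
      by (rule member_le_sum) (use nvnn in auto)
    then show ?thesis using pos by simp
  qed
  have lamQ: "lam * N \<le> Q"
  proof -
    have "lam * N = (\<Sum>u\<in>UNIV. lam * nv u * (x$u)^2)"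
      unfolding N_def y_def by (simp add: sum_distrib_left mult.assoc)
    also have "\<dots> = (\<Sum>u\<in>UNIV. \<Sum>w\<in>UNIV. if E u w then x$u * x$w else 0)"
      using row by simp
    also have "\<dots> \<le> Q" unfolding Q_def y_def
      by (intro sum_mono) (auto simp: abs_mult[symmetric])
    finally show ?thesis .
  qed
  define P where "P u w = (\<lambda>v. if v = u \<or> v = w then y v else 0)" for u w
  define win where "win u w \<longleftrightarrow> u \<in> W (P u w)" for u w
  have Pnn: "nonneg (P u w)" for u w unfolding nonneg_def P_def using ynn by simp
  have Psym: "P u w = P w u" for u w unfolding P_def by (auto simp: fun_eq_iff)
  have edge_win: "win u w \<or> win w u" if "E u w" for u w
  proof -
    have "vertex_cover E (W (P u w))" using mech Pnn unfolding is_mechanism_def by blast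
    then have "u \<in> W (P u w) \<or> w \<in> W (P u w)" using that unfolding vertex_cover_def by blast
    then show ?thesis unfolding win_def by (simp add: Psym[of w u])
  qed
  define cw where "cw w = (\<lambda>v. y w * (if v = w then 1 else 0))" for w
  have cwnn: "nonneg (cw w)" for w unfolding nonneg_def cw_def using ynn by simp
  have Tr: "\<And>b e ce x. nonneg b \<Longrightarrow> 0 \<le> ce \<Longrightarrow> 0 \<le> x \<Longrightarrow>
        profit W p (b(e := x)) e ce \<le> profit W p (b(e := ce)) e ce"
    using tru unfolding truthful_def by blast
  have Mb: "\<And>b. nonneg b \<Longrightarrow> \<forall>e\<in>W b. b e \<le> p b e"
    using mech unfolding is_mechanism_def by blast
  define tp where "tp w = total_payment W p (cw w)" for w
  have key: "(\<Sum>u\<in>UNIV. if E u w \<and> win u w then y u else 0) \<le> tp w" for w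
  proof -
    have fg: "(if E u w \<and> win u w then y u else 0) \<le> (if u \<in> W (cw w) then p (cw w) u else 0)" for u
    proof (cases "E u w \<and> win u w \<and> 0 < y u")
      case True
      then have uw: "u \<noteq> w" using noloop by blast
      have e1: "(cw w)(u := y u) = P u w" using uw unfolding cw_def P_def by (auto simp: fun_eq_iff)
      have e2: "(cw w)(u := 0) = cw w" using uw unfolding cw_def by (auto simp: fun_eq_iff)
      have "profit W p ((cw w)(u := y u)) u 0 \<le> profit W p ((cw w)(u := 0)) u 0"
        using Tr[OF cwnn order_refl ynn] .
      then have pr: "profit W p (P u w) u 0 \<le> profit W p (cw w) u 0" unfolding e1 e2 .
      have "u \<in> W (P u w)" using True unfolding win_def by blast
      then have "P u w u \<le> p (P u w) u" using Mb[OF Pnn] by blast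
      then have "y u \<le> p (P u w) u" by (simp add: P_def)
      then have "y u \<le> profit W p (P u w) u 0" using \<open>u \<in> W (P u w)\<close> unfolding profit_def by simp
      then have "y u \<le> profit W p (cw w) u 0" using pr by simp
      then have yp: "y u \<le> profit W p (cw w) u 0" .
      have uW: "u \<in> W (cw w)"
      proof (rule ccontr)
        assume "u \<notin> W (cw w)"
        then have "profit W p (cw w) u 0 = 0" by (simp add: profit_def)
        then show False using yp True by simp
      qed
      then have "y u \<le> p (cw w) u" using yp by (simp add: profit_def)
      then show ?thesis using True uW by simp
    next
      case False
      have "0 \<le> (if u \<in> W (cw w) then p (cw w) u else 0)"
      proof (cases "u \<in> W (cw w)")
        case True
        then have "cw w u \<le> p (cw w) u" using Mb[OF cwnn] by blast
        moreover have "0 \<le> cw w u" using cwnn unfolding nonneg_def by blast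
        ultimately show ?thesis using True by simp
      qed simp
      moreover have "(if E u w \<and> win u w then y u else 0) = 0"
        using False ynn[of u] by auto
      ultimately show ?thesis by simp
    qed
    have "(\<Sum>u\<in>UNIV. if E u w \<and> win u w then y u else 0) \<le> (\<Sum>u\<in>UNIV. if u \<in> W (cw w) then p (cw w) u else 0)"
      by (intro sum_mono fg)
    also have "\<dots> = tp w" unfolding tp_def total_payment_def
      by (simp add: sum.If_cases)
    finally show ?thesis .
  qed
  show ?thesis
  proof (cases "frugality_ratio E W p")
    case PInf
    then show ?thesis by simp
  next
    case (real r)
    have bound: "tp w \<le> r * (y w * nv w)" if "0 < y w" for w
    proof -
      have nuc: "nu E (cw w) = y w * nv w" unfolding cw_def using nvscale[OF that] by simp
      have pos: "0 < y w * nv w" using that nv1[of w] by simp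
      have "ereal (total_payment W p (cw w) / nu E (cw w)) \<le> frugality_ratio E W p"
        unfolding frugality_ratio_def
        by (rule SUP_upper) (use cwnn nuc pos in simp)
      then have "tp w / (y w * nv w) \<le> r" using real nuc unfolding tp_def by simp
      then show ?thesis using pos by (simp add: divide_le_eq)
    qed
    define L where "L = (\<Sum>u\<in>UNIV. \<Sum>w\<in>UNIV. if E u w \<and> win u w then y u * y w else 0)"
    have Lb: "L \<le> r * N"
    proof -
      have "L = (\<Sum>w\<in>UNIV. y w * (\<Sum>u\<in>UNIV. if E u w \<and> win u w then y u else 0))"
        unfolding L_def by (subst sum.swap, rule sum.cong, rule refl, simp add: sum_distrib_left, rule sum.cong, auto)
      also have "\<dots> \<le> (\<Sum>w\<in>UNIV. r * (nv w * (y w)^2))"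
      proof (rule sum_mono)
        fix w
        show "y w * (\<Sum>u\<in>UNIV. if E u w \<and> win u w then y u else 0) \<le> r * (nv w * (y w)^2)"
        proof (cases "0 < y w")
          case True
          have "y w * (\<Sum>u\<in>UNIV. if E u w \<and> win u w then y u else 0) \<le> y w * tp w"
            using key[of w] True by (simp add: mult_left_mono)
          also have "\<dots> \<le> y w * (r * (y w * nv w))" using bound[OF True] True by (simp add: mult_left_mono)
          finally show ?thesis by (simp add: power2_eq_square algebra_simps)
        next
          case False
          then have "y w = 0" using ynn[of w] by simp
          then show ?thesis by simp
        qed
      qed
      also have "\<dots> = r * N" unfolding N_def by (simp add: sum_distrib_left)
      finally show ?thesis .
    qed
    have L2: "L = (\<Sum>u\<in>UNIV. \<Sum>w\<in>UNIV. if E u w \<and> win w u then y u * y w else 0)"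
      unfolding L_def by (subst sum.swap, intro sum.cong refl, simp add: sym mult.commute)
    have "Q \<le> L + L"
    proof -
      have "Q \<le> (\<Sum>u\<in>UNIV. \<Sum>w\<in>UNIV. (if E u w \<and> win u w then y u * y w else 0) + (if E u w \<and> win w u then y u * y w else 0))"
        unfolding Q_def
      proof (intro sum_mono)
        fix u w
        show "(if E u w then y u * y w else 0) \<le> (if E u w \<and> win u w then y u * y w else 0) + (if E u w \<and> win w u then y u * y w else 0)"
          using edge_win[of u w] ynn[of u] ynn[of w] by (auto intro: mult_nonneg_nonneg)
      qed
      also have "\<dots> = (\<Sum>u\<in>UNIV. \<Sum>w\<in>UNIV. if E u w \<and> win u w then y u * y w else 0) + (\<Sum>u\<in>UNIV. \<Sum>w\<in>UNIV. if E u w \<and> win w u then y u * y w else 0)"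
        by (simp add: sum.distrib)
      also have "\<dots> = L + L" using L2 unfolding L_def by simp
      finally show ?thesis .
    qed
    then have "lam * N \<le> 2 * (r * N)" using lamQ Lb by simp
    then have "lam \<le> 2 * r" using Npos by (simp add: mult.commute mult_le_cancel_right_pos) 
    then show ?thesis using real unfolding lam_def K_def by simp
  next
    case MInf
    obtain w0 where "x $ w0 \<noteq> 0" using x0 by (metis vec_eq_iff zero_index)
    then have yw0: "0 < y w0" unfolding y_def by simp
    have "ereal (total_payment W p (cw w0) / nu E (cw w0)) \<le> frugality_ratio E W p"
      unfolding frugality_ratio_def
      by (rule SUP_upper) (use cwnn nvscale[OF yw0] yw0 nv1[of w0] in \<open>simp add: cw_def\<close>)
    then show ?thesis using MInf by simp
  qed
qed


end
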